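(* Let $\lambda/\mu$ be a border strip with $n$ cells, let $Q_{\lambda/\mu}$ be its border strip poset, and let $\omega$ be a reversed Schur labeling of it. Then $$e_q^{\mathrm{maj}}(Q_{\lambda/\mu},\omega)=\sum_{\mu\to\nu} q^{|Q_{\lambda/\nu_1}|}\, e_q^{\mathrm{maj}}(Q_{\lambda/\nu},\omega_\nu),$$ where the sum is over inner corners $u$ of $\lambda/\mu$ (with $[\nu]=[\mu]\cup\{u\}$), $Q_{\lambda/\nu}$ is the subposet on $[\lambda/\nu]=[\lambda/\mu]\setminus\{u\}$, $\omega_\nu$ is the restriction of $\omega$, and $Q_{\lambda/\nu_1}$ is the set of cells of $[\lambda/\mu]$ with content less than $c(u)$.
   Context: English notation: $[\lambda]=\{(i,j):1\le i\le\ell(\lambda),1\le j\le\lambda_i\}$, $[\lambda/\mu]=[\lambda]\setminus[\mu]$, content $c(i,j)=j-i$. A border strip is a skew shape whose diagram is edge-connected with no $2\times2$ square (its cells have distinct contents). Its poset $Q_{\lambda/\mu}$ on $[\lambda/\mu]$ has $(i,j)\le(i',j')$ iff $i\ge i'$ and $j\ge j'$; inner corners are cells $u\in[\lambda/\mu]$ with $[\mu]\cup\{u\}$ a partition diagram. A reversed Schur labeling is a bijection $\omega:[\lambda/\mu]\to[n]$ whose values strictly decrease as the cells are listed in increasing order of content. For a poset $R$ with injective labeling $\omega_R$ into $\mathbb{Z}$ and $|R|=r$, each order-preserving bijection $g:R\to[r]$ gives the word $\sigma=\omega_R\circ g^{-1}$; $\mathrm{maj}(\sigma)=\sum_{i:\sigma_i>\sigma_{i+1}}i$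 and $e_q^{\mathrm{maj}}(R,\omega_R)=\sum_g q^{\mathrm{maj}(\omega_R\circ g^{-1})}$. *)

theory Defs
  imports Main
begin

type_synonym cell = "nat \<times> nat"

definition is_partition :: "nat list \<Rightarrow> bool" where
  "is_partition lam \<longleftrightarrow> sorted_wrt (\<ge>) lam \<and> (\<forall>x\<in>set lam. 0 < x)"

definition diagram :: "nat list \<Rightarrow> cell set" where
  "diagram lam = {(i, j). 1 \<le> i \<and> i \<le> length lam \<and> 1 \<le> j \<and> j \<le> lam ! (i - 1)}"

definition skew :: "nat list \<Rightarrow> nat list \<Rightarrow> cell set" where
  "skew lam mu = diagram lam - diagram mu"

definition content :: "cell \<Rightarrow> int" where
  "content c = int (snd c) - int (fst c)"

definition adjacent :: "cell \<Rightarrow> cell \<Rightarrow> bool" where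
  "adjacent a b \<longleftrightarrow>
     (fst a = fst b \<and> (snd b = Suc (snd a) \<or> snd a = Suc (snd b))) \<or>
     (snd a = snd b \<and> (fst b = Suc (fst a) \<or> fst a = Suc (fst b)))"

definition edge_connected :: "cell set \<Rightarrow> bool" where
  "edge_connected S \<longleftrightarrow> S \<noteq> {} \<and>
     (\<forall>a\<in>S. \<forall>b\<in>S. (\<lambda>x y. x \<in> S \<and> y \<in> S \<and> adjacent x y)\<^sup>*\<^sup>* a b)"

definition no_2x2 :: "cell set \<Rightarrow> bool" where
  "no_2x2 S \<longleftrightarrow> \<not> (\<exists>i j. (i, j) \<in> S \<and> (Suc i, j) \<in> S \<and> (i, Suc j) \<in> S \<and> (Suc i, Suc j) \<in> S)"

definition border_strip :: "nat list \<Rightarrow> nat list \<Rightarrow> bool" where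
  "border_strip lam mu \<longleftrightarrow> is_partition lam \<and> is_partition mu \<and>
     diagram mu \<subseteq> diagram lam \<and> edge_connected (skew lam mu) \<and> no_2x2 (skew lam mu)"

definition Qle :: "cell \<Rightarrow> cell \<Rightarrow> bool" where
  "Qle a b \<longleftrightarrow> fst a \<ge> fst b \<and> snd a \<ge> snd b"

definition inner_corners :: "nat list \<Rightarrow> nat list \<Rightarrow> cell set" where
  "inner_corners lam mu = {u \<in> skew lam mu. \<exists>nu. is_partition nu \<and> diagram nu = diagram mu \<union> {u}}"

definition reversed_schur_labeling :: "nat list \<Rightarrow> nat list \<Rightarrow> (cell \<Rightarrow> nat) \<Rightarrow> bool" where
  "reversed_schur_labeling lam mu \<omega> \<longleftrightarrow>
     bij_betw \<omega> (skew lam mu) {1..card (skew lam mu)} \<and>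
     (\<forall>u\<in>skew lam mu. \<forall>v\<in>skew lam mu. content u < content v \<longrightarrow> \<omega> v < \<omega> u)"

text \<open>Order-preserving bijections g : R -> [r] (made unique outside R by g x = 0).\<close>
definition lin_exts :: "('b \<Rightarrow> 'b \<Rightarrow> bool) \<Rightarrow> 'b set \<Rightarrow> ('b \<Rightarrow> nat) set" where
  "lin_exts le R = {g. bij_betw g R {1..card R} \<and>
      (\<forall>x\<in>R. \<forall>y\<in>R. le x y \<longrightarrow> g x \<le> g y) \<and> (\<forall>x. x \<notin> R \<longrightarrow> g x = 0)}"

definition maj :: "(nat \<Rightarrow> 'c::linorder) \<Rightarrow> nat \<Rightarrow> nat" where
  "maj \<sigma> r = (\<Sum>i\<in>{i. 1 \<le> i \<and> i < r \<and> \<sigma> (Suc i) < \<sigma> i}. i)"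

definition emaj :: "('b \<Rightarrow> 'b \<Rightarrow> bool) \<Rightarrow> 'b set \<Rightarrow> ('b \<Rightarrow> 'c::linorder) \<Rightarrow> 'a::comm_ring_1 \<Rightarrow> 'a" where
  "emaj le R \<omega> q = (\<Sum>g\<in>lin_exts le R. q ^ maj (\<lambda>k. \<omega> (inv_into R g k)) (card R))"

end

theory Submission
  imports Defs
begin

fun qC :: "'a::comm_ring_1 \<Rightarrow> nat \<Rightarrow> nat \<Rightarrow> 'a" where
  "qC q 0 b = 1"
| "qC q (Suc a) 0 = 1"
| "qC q (Suc a) (Suc b) = qC q a (Suc b) + q ^ Suc a * qC q (Suc a) b"

declare qC.simps(3)[simp del]

lemma qC_rule2: "qC q (Suc a) (Suc b) = q ^ Suc b * qC q a (Suc b) + qC q (Suc a) b"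
proof (induction "a + b" arbitrary: a b rule: less_induct)
  case less
  show ?case
  proof (cases a)
    case 0
    then show ?thesis
    proof (induction b)
      case 0 then show ?case by (simp add: qC.simps(3))
    next
      case (Suc b)
      then show ?case by (simp add: algebra_simps qC.simps(3))
    qed
  next
    case (Suc a1)
    show ?thesis
    proof (cases b)
      case 0
      have "qC q (Suc a1) (Suc 0) = q ^ Suc 0 * qC q a1 (Suc 0) + qC q (Suc a1) 0"
        using less.hyps[of a1 0] Suc 0 by simp
      then have H': "qC q a1 (Suc 0) + q * q ^ a1 = q * qC q a1 (Suc 0) + 1" by (simp add: qC.simps(3))
      have "q * (qC q a1 (Suc 0) + q * q ^ a1) = q * (q * qC q a1 (Suc 0) + 1)" using H' by simp
      then show ?thesis using Suc 0 H' by (simp add: algebra_simps qC.simps(3))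
    next
      case (Suc b1)
      define P where "P = qC q a1 (Suc b)"
      define Q where "Q = qC q a b"
      define R where "R = qC q (Suc a) b1"
      have I1: "qC q (Suc a1) (Suc b) = q ^ Suc b * qC q a1 (Suc b) + qC q (Suc a1) b"
        using less.hyps[of a1 b] \<open>a = Suc a1\<close> by simp
      have I2: "qC q (Suc a) (Suc b1) = q ^ Suc b1 * qC q a (Suc b1) + qC q (Suc a) b1"
        using less.hyps[of a b1] \<open>b = Suc b1\<close> by simp
      have D2: "qC q a (Suc b) = P + q ^ a * Q"
        unfolding P_def Q_def \<open>a = Suc a1\<close> by (rule qC.simps(3))
      have D3: "qC q (Suc a) b = Q + q ^ Suc a * R"
        unfolding Q_def R_def \<open>b = Suc b1\<close> by (rule qC.simps(3))
      have al: "P + q ^ a * Q = q ^ Suc b * P + Q"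
        using I1 D2 unfolding P_def Q_def \<open>a = Suc a1\<close> by simp
      have be: "Q + q ^ Suc a * R = q ^ b * Q + R"
        using I2 D3 unfolding Q_def R_def \<open>b = Suc b1\<close> by simp
      have "qC q (Suc a) (Suc b) = (P + q ^ a * Q) + q ^ Suc a * (Q + q ^ Suc a * R)"
        by (simp only: qC.simps(3) D2 D3)
      also have "\<dots> = (q ^ Suc b * P + Q) + q ^ Suc a * (q ^ b * Q + R)"
        by (simp only: al be)
      also have "\<dots> = q ^ Suc b * (P + q ^ a * Q) + (Q + q ^ Suc a * R)"
        by (simp add: algebra_simps power_add)
      also have "\<dots> = q ^ Suc b * qC q a (Suc b) + qC q (Suc a) b"
        by (simp only: D2 D3)
      finally show ?thesis .
    qed
  qed
qed

definition M :: "('b \<Rightarrow> 'c::linorder) \<Rightarrow> 'b list \<Rightarrow> nat" where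
  "M \<omega> w = maj (\<lambda>k. \<omega> (w ! (k - 1))) (length w)"

lemma M_Nil[simp]: "M \<omega> [] = 0" and M_single[simp]: "M \<omega> [x] = 0"
  by (auto simp: M_def maj_def)

lemma M_snoc: "M \<omega> (w @ [x]) = M \<omega> w + (if w \<noteq> [] \<and> \<omega> x < \<omega> (last w) then length w else 0)"
proof -
  let ?m = "length w"
  let ?s = "\<lambda>k. \<omega> ((w @ [x]) ! (k - 1))"
  let ?t = "\<lambda>k. \<omega> (w ! (k - 1))"
  have A0: "(1 \<le> i \<and> i < Suc ?m \<and> ?s (Suc i) < ?s i) \<longleftrightarrow>
        (1 \<le> i \<and> i < ?m \<and> ?t (Suc i) < ?t i) \<or> (i = ?m \<and> w \<noteq> [] \<and> \<omega> x < \<omega> (last w))" for i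
  proof -
    consider "i < ?m" | "i = ?m" | "i > ?m" by linarith
    then show ?thesis
    proof cases
      case 1 then show ?thesis by (auto simp: nth_append)
    next
      case 2 then show ?thesis by (cases w rule: rev_cases) (auto simp: nth_append)
    qed auto
  qed
  have A: "{i. 1 \<le> i \<and> i < Suc ?m \<and> ?s (Suc i) < ?s i} =
        {i. 1 \<le> i \<and> i < ?m \<and> ?t (Suc i) < ?t i} \<union> {i. i = ?m \<and> w \<noteq> [] \<and> \<omega> x < \<omega> (last w)}"
    using A0 by blast
  have "M \<omega> (w @ [x]) = (\<Sum>i\<in>{i. 1 \<le> i \<and> i < ?m \<and> ?t (Suc i) < ?t i} \<union> {i. i = ?m \<and> w \<noteq> [] \<and> \<omega> x < \<omega> (last w)}. i)"
    unfolding M_def maj_def using A by simp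
  also have "\<dots> = M \<omega> w + (\<Sum>i\<in>{i. i = ?m \<and> w \<noteq> [] \<and> \<omega> x < \<omega> (last w)}. i)"
    unfolding M_def maj_def by (subst sum.union_disjoint) auto
  also have "(\<Sum>i\<in>{i. i = ?m \<and> w \<noteq> [] \<and> \<omega> x < \<omega> (last w)}. i) = (if w \<noteq> [] \<and> \<omega> x < \<omega> (last w) then ?m else 0)"
    by auto
  finally show ?thesis .
qed

definition sh :: "'b list \<Rightarrow> 'b list \<Rightarrow> 'b list set" where
  "sh u v = {w. distinct w \<and> set w = set u \<union> set v \<and> filter (\<lambda>z. z \<in> set u) w = u \<and> filter (\<lambda>z. z \<in> set v) w = v}"

lemma sh_commute: "sh u v = sh v u"
  unfolding sh_def by auto

lemma finite_sh: "finite (sh u v)"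
proof -
  have "sh u v \<subseteq> {w. set w \<subseteq> set u \<union> set v \<and> length w \<le> card (set u \<union> set v)}"
    unfolding sh_def by (auto simp: distinct_card[symmetric])
  then show ?thesis by (rule finite_subset) (auto intro: finite_lists_length_le)
qed

lemma sh_Nil: assumes "distinct v" shows "sh [] v = {v}"
proof -
  have "w = v" if "w \<in> sh [] v" for w
  proof -
    from that have "set w = set v" "filter (\<lambda>z. z \<in> set v) w = v" unfolding sh_def by auto
    then show ?thesis by (metis filter_True)
  qed
  moreover have "v \<in> sh [] v" using assms unfolding sh_def by auto
  ultimately show ?thesis by blast
qed

lemma sh_length:
  assumes "w \<in> sh u v" "distinct u" "distinct v" "set u \<inter> set v = {}"
  shows "length w = length u + length v"
proof -
  from assms(1) have "distinct w" "set w = set u \<union> set v" unfolding sh_def by auto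
  then have "length w = card (set u \<union> set v)" using distinct_card by metis
  also have "\<dots> = card (set u) + card (set v)" by (rule card_Un_disjoint) (use assms in auto)
  also have "\<dots> = length u + length v" using assms by (simp add: distinct_card)
  finally show ?thesis .
qed

lemma last_filter: "w \<noteq> [] \<Longrightarrow> P (last w) \<Longrightarrow> filter P w \<noteq> [] \<and> last (filter P w) = last w"
proof -
  assume "w \<noteq> []" "P (last w)"
  then obtain w0 where "w = w0 @ [last w]" by (metis append_butlast_last_id)
  then have "filter P w = filter P w0 @ [last w]" using \<open>P (last w)\<close> by (metis filter.simps filter_append)
  then show ?thesis by simp
qed

lemma sh_last: "w \<in> sh u v \<Longrightarrow> w \<noteq> [] \<Longrightarrow> last w \<in> set u \<Longrightarrow> u \<noteq> [] \<and> last w = last u"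
  unfolding sh_def using last_filter[of w "\<lambda>z. z \<in> set u"] by auto

lemma sh_snoc_left:
  assumes "distinct (u @ [x])" "distinct v" "set (u @ [x]) \<inter> set v = {}"
  shows "{w \<in> sh (u @ [x]) v. w \<noteq> [] \<and> last w \<in> set (u @ [x])} = (\<lambda>w'. w' @ [x]) ` sh u v"
proof (intro set_eqI iffI)
  have xu: "x \<notin> set u" "x \<notin> set v" using assms by auto
  fix w assume w: "w \<in> {w \<in> sh (u @ [x]) v. w \<noteq> [] \<and> last w \<in> set (u @ [x])}"
  then have wsh: "w \<in> sh (u @ [x]) v" and wne: "w \<noteq> []" and wl0: "last w \<in> set (u @ [x])" by auto
  have wl: "last w = x" using sh_last[OF wsh wne wl0] by simp
  define w0 where "w0 = butlast w"
  have w0: "w = w0 @ [x]" using append_butlast_last_id[OF wne] wl unfolding w0_def by simp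
  from wsh have d: "distinct w" and sw: "set w = set (u @ [x]) \<union> set v"
    and f1: "filter (\<lambda>z. z \<in> set (u @ [x])) w = u @ [x]" and f2: "filter (\<lambda>z. z \<in> set v) w = v"
    unfolding sh_def by auto
  have xw0: "x \<notin> set w0" using d w0 by simp
  have "filter (\<lambda>z. z \<in> set (u @ [x])) w0 = u" using f1 w0 by simp
  moreover have "filter (\<lambda>z. z \<in> set (u @ [x])) w0 = filter (\<lambda>z. z \<in> set u) w0"
    using xw0 by (intro filter_cong) auto
  ultimately have g1: "filter (\<lambda>z. z \<in> set u) w0 = u" by simp
  have g2: "filter (\<lambda>z. z \<in> set v) w0 = v" using f2 xu(2) unfolding w0 by simp
  have g3: "set w0 = set u \<union> set v"
  proof -
    have "insert x (set w0) = insert x (set u \<union> set v)" using sw w0 by auto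
    then show ?thesis using xw0 xu by (metis Un_iff insert_ident)
  qed
  have "distinct w0" using d w0 by simp
  with g1 g2 g3 have "w0 \<in> sh u v" unfolding sh_def by blast
  then show "w \<in> (\<lambda>w'. w' @ [x]) ` sh u v" using w0 by blast
next
  have xu: "x \<notin> set u" "x \<notin> set v" using assms by auto
  fix w assume "w \<in> (\<lambda>w'. w' @ [x]) ` sh u v"
  then obtain w0 where w0: "w = w0 @ [x]" "w0 \<in> sh u v" by blast
  then have d: "distinct w0" and s: "set w0 = set u \<union> set v"
    and f1: "filter (\<lambda>z. z \<in> set u) w0 = u" and f2: "filter (\<lambda>z. z \<in> set v) w0 = v"
    unfolding sh_def by auto
  have xw0: "x \<notin> set w0" using s xu by blast
  have "filter (\<lambda>z. z \<in> set (u @ [x])) w0 = filter (\<lambda>z. z \<in> set u) w0"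
    using xw0 by (intro filter_cong) auto
  then have h1: "filter (\<lambda>z. z \<in> set (u @ [x])) w = u @ [x]" using w0 f1 by simp
  have h2: "filter (\<lambda>z. z \<in> set v) w = v" using w0 f2 xu by simp
  have h3: "distinct w" using w0 d xw0 by simp
  have h4: "set w = set (u @ [x]) \<union> set v" using w0 s by auto
  from h1 h2 h3 h4 have "w \<in> sh (u @ [x]) v" unfolding sh_def by blast
  then show "w \<in> {w \<in> sh (u @ [x]) v. w \<noteq> [] \<and> last w \<in> set (u @ [x])}"
    using w0 by simp
qed

lemma sh_split:
  assumes "set u \<inter> set v = {}" "u \<noteq> [] \<or> v \<noteq> []"
  shows "(\<Sum>w\<in>sh u v. f w) = (\<Sum>w\<in>{w \<in> sh u v. w \<noteq> [] \<and> last w \<in> set u}. f w) + (\<Sum>w\<in>{w \<in> sh u v. w \<noteq> [] \<and> last w \<in> set v}. f w)"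
proof -
  have ne: "w \<noteq> []" if "w \<in> sh u v" for w using that assms(2) unfolding sh_def by auto
  have "sh u v = {w \<in> sh u v. w \<noteq> [] \<and> last w \<in> set u} \<union> {w \<in> sh u v. w \<noteq> [] \<and> last w \<in> set v}"
  proof (intro set_eqI iffI)
    fix w assume "w \<in> sh u v"
    then have "last w \<in> set w" "w \<noteq> []" using ne by auto
    then show "w \<in> {w \<in> sh u v. w \<noteq> [] \<and> last w \<in> set u} \<union> {w \<in> sh u v. w \<noteq> [] \<and> last w \<in> set v}"
      using \<open>w \<in> sh u v\<close> unfolding sh_def by auto
  qed auto
  moreover have "finite {w \<in> sh u v. w \<noteq> [] \<and> last w \<in> set u}" "finite {w \<in> sh u v. w \<noteq> [] \<and> last w \<in> set v}"
    by (rule finite_subset[OF _ finite_sh], blast)+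
  moreover have "{w \<in> sh u v. w \<noteq> [] \<and> last w \<in> set u} \<inter> {w \<in> sh u v. w \<noteq> [] \<and> last w \<in> set v} = {}"
    using assms(1) by auto
  ultimately show ?thesis
    using sum.union_disjoint[of "{w \<in> sh u v. w \<noteq> [] \<and> last w \<in> set u}" "{w \<in> sh u v. w \<noteq> [] \<and> last w \<in> set v}" f]
    by simp
qed

lemma qC_0_right[simp]: "qC q a 0 = 1"
  by (cases a) auto

lemma alg_r2: "q ^ (c + Suc b) * (X * qC q a (Suc b)) + X * q ^ c * qC q (Suc a) b = X * q ^ c * qC q (Suc a) (Suc b)"
proof -
  have "X * q ^ c * qC q (Suc a) (Suc b) = X * q ^ c * (q ^ Suc b * qC q a (Suc b) + qC q (Suc a) b)"
    by (simp only: qC_rule2)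
  then show ?thesis by (simp only: power_add algebra_simps)
qed

lemma alg_r1: "X * qC q a (Suc b) + X * q ^ Suc a * qC q (Suc a) b = X * qC q (Suc a) (Suc b)"
  by (simp add: algebra_simps qC.simps(3))

definition SB :: "('b \<Rightarrow> 'c::linorder) \<Rightarrow> 'a::comm_ring_1 \<Rightarrow> 'b list \<Rightarrow> 'b list \<Rightarrow> 'a" where
  "SB \<omega> q u v = (\<Sum>w\<in>{w \<in> sh u v. w \<noteq> [] \<and> last w \<in> set u}. q ^ M \<omega> w)"

lemma SB_snoc:
  assumes "distinct (u @ [x])" "distinct v" "set (u @ [x]) \<inter> set v = {}"
  shows "SB \<omega> q (u @ [x]) v = (\<Sum>w\<in>sh u v. q ^ M \<omega> (w @ [x]))"
  unfolding SB_def sh_snoc_left[OF assms]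
  by (subst sum.reindex) (auto simp: inj_on_def)

lemma SB_Nil: "SB \<omega> q [] v = 0"
  unfolding SB_def by simp

lemma sum_part_u:
  assumes "distinct u" "distinct v" "set u \<inter> set v = {}"
  shows "(\<Sum>w\<in>{w \<in> sh u v. w \<noteq> [] \<and> last w \<in> set u}. q ^ (M \<omega> w + c)) = q ^ c * SB \<omega> q u v"
  unfolding SB_def sum_distrib_left by (simp add: power_add mult.commute)

lemma part_v_eq: "{w \<in> sh u v. w \<noteq> [] \<and> last w \<in> set v} = {w \<in> sh v u. w \<noteq> [] \<and> last w \<in> set v}"
  using sh_commute[of u v] by simp

lemma closed:
  assumes "distinct u" "distinct v" "set u \<inter> set v = {}" "\<forall>x\<in>set u. \<forall>y\<in>set v. \<omega> y < \<omega> x"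
  shows "(u \<noteq> [] \<longrightarrow> SB \<omega> q u v = q ^ (M \<omega> u + M \<omega> v) * qC q (length u - 1) (length v)) \<and>
         (v \<noteq> [] \<longrightarrow> SB \<omega> q v u = q ^ (M \<omega> u + M \<omega> v + length u) * qC q (length u) (length v - 1))"
  using assms
proof (induction "length u + length v" arbitrary: u v rule: less_induct)
  case less
  note dist = less.prems
  show ?case
  proof (intro conjI impI)
    assume "u \<noteq> []"
    then obtain u0 x where ux: "u = u0 @ [x]" by (metis append_butlast_last_id)
    have d1: "distinct (u0 @ [x])" "distinct v" "set (u0 @ [x]) \<inter> set v = {}" using dist ux by auto
    have S1: "SB \<omega> q u v = (\<Sum>w\<in>sh u0 v. q ^ M \<omega> (w @ [x]))"
      using SB_snoc[OF d1] ux by simp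
    show "SB \<omega> q u v = q ^ (M \<omega> u + M \<omega> v) * qC q (length u - 1) (length v)"
    proof (cases "u0 = []")
      case True
      have "M \<omega> (v @ [x]) = M \<omega> v"
      proof (cases "v = []")
        case False
        then have "last v \<in> set v" by simp
        then have "\<omega> (last v) < \<omega> x" using dist(4) ux by auto
        then show ?thesis by (auto simp: M_snoc)
      qed simp
      then show ?thesis using S1 True ux sh_Nil[OF dist(2)] by simp
    next
      case False
      define d where "d = (\<omega> x < \<omega> (last u0))"
      define a0 where "a0 = length u0"
      define b where "b = length v"
      have du0: "distinct u0" "set u0 \<inter> set v = {}" using d1 by auto
      have Mu: "M \<omega> u = M \<omega> u0 + (if d then a0 else 0)"
        using ux False by (simp add: M_snoc d_def a0_def)
      have "(\<Sum>w\<in>sh u0 v. q ^ M \<omega> (w @ [x])) =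
          (\<Sum>w\<in>{w \<in> sh u0 v. w \<noteq> [] \<and> last w \<in> set u0}. q ^ M \<omega> (w @ [x])) +
          (\<Sum>w\<in>{w \<in> sh u0 v. w \<noteq> [] \<and> last w \<in> set v}. q ^ M \<omega> (w @ [x]))"
        by (rule sh_split) (use du0 False in auto)
      also have "(\<Sum>w\<in>{w \<in> sh u0 v. w \<noteq> [] \<and> last w \<in> set u0}. q ^ M \<omega> (w @ [x])) =
          (\<Sum>w\<in>{w \<in> sh u0 v. w \<noteq> [] \<and> last w \<in> set u0}. q ^ (M \<omega> w + (if d then a0 + b else 0)))"
      proof (rule sum.cong[OF refl])
        fix w assume w: "w \<in> {w \<in> sh u0 v. w \<noteq> [] \<and> last w \<in> set u0}"
        then have "last w = last u0" using sh_last by blast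
        moreover have "length w = a0 + b" using w sh_length du0 d1 a0_def b_def by auto
        ultimately show "q ^ M \<omega> (w @ [x]) = q ^ (M \<omega> w + (if d then a0 + b else 0))"
          using w by (simp add: M_snoc d_def)
      qed
      also have "\<dots> = q ^ (if d then a0 + b else 0) * SB \<omega> q u0 v"
        by (rule sum_part_u) (use du0 d1 in auto)
      also have "(\<Sum>w\<in>{w \<in> sh u0 v. w \<noteq> [] \<and> last w \<in> set v}. q ^ M \<omega> (w @ [x])) =
          (\<Sum>w\<in>{w \<in> sh u0 v. w \<noteq> [] \<and> last w \<in> set v}. q ^ M \<omega> w)"
      proof (rule sum.cong[OF refl])
        fix w assume w: "w \<in> {w \<in> sh u0 v. w \<noteq> [] \<and> last w \<in> set v}"
        then have "\<omega> (last w) < \<omega> x" using dist(4) ux by auto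
        then show "q ^ M \<omega> (w @ [x]) = q ^ M \<omega> w" using w by (auto simp: M_snoc)
      qed
      also have "\<dots> = SB \<omega> q v u0" by (simp only: SB_def part_v_eq[of u0 v])
      finally have S2: "SB \<omega> q u v = q ^ (if d then a0 + b else 0) * SB \<omega> q u0 v + SB \<omega> q v u0"
        using S1 by simp
      have lt: "length u0 + length v < length u + length v" using ux by simp
      have pr: "\<forall>x\<in>set u0. \<forall>y\<in>set v. \<omega> y < \<omega> x" using dist(4) ux by auto
      have IH: "SB \<omega> q u0 v = q ^ (M \<omega> u0 + M \<omega> v) * qC q (a0 - 1) b"
               "v \<noteq> [] \<Longrightarrow> SB \<omega> q v u0 = q ^ (M \<omega> u0 + M \<omega> v + a0) * qC q a0 (b - 1)"
      proof -
        have "(u0 \<noteq> [] \<longrightarrow> SB \<omega> q u0 v = q ^ (M \<omega> u0 + M \<omega> v) * qC q (length u0 - 1) (length v)) \<and>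
         (v \<noteq> [] \<longrightarrow> SB \<omega> q v u0 = q ^ (M \<omega> u0 + M \<omega> v + length u0) * qC q (length u0) (length v - 1))"
          by (rule less.hyps[OF lt du0(1) dist(2) du0(2) pr])
        then show "SB \<omega> q u0 v = q ^ (M \<omega> u0 + M \<omega> v) * qC q (a0 - 1) b"
               "v \<noteq> [] \<Longrightarrow> SB \<omega> q v u0 = q ^ (M \<omega> u0 + M \<omega> v + a0) * qC q a0 (b - 1)"
          using False unfolding a0_def b_def by blast+
      qed
      obtain a1 where a1: "a0 = Suc a1" using False unfolding a0_def by (cases u0) auto
      have la: "length u - 1 = a0" using ux a0_def by simp
      show ?thesis
      proof (cases "v = []")
        case True
        then show ?thesis using S2 IH Mu la a1 b_def SB_Nil[of \<omega> q u0]
          by (simp add: power_add)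
      next
        case vne: False
        then obtain b1 where b1: "b = Suc b1" unfolding b_def by (cases v) auto
        note IH2 = IH(2)[OF vne]
        define X where "X = q ^ (M \<omega> u0 + M \<omega> v)"
        have IHa: "SB \<omega> q u0 v = X * qC q a1 (Suc b1)" using IH(1) a1 b1 X_def by simp
        have IHb: "SB \<omega> q v u0 = X * q ^ Suc a1 * qC q (Suc a1) b1" using IH2 a1 b1 X_def by (simp add: power_add)
        have lv: "length v = Suc b1" using b_def b1 by simp
        show ?thesis
        proof (cases d)
          case True
          have "SB \<omega> q u v = q ^ (Suc a1 + Suc b1) * (X * qC q a1 (Suc b1)) + X * q ^ Suc a1 * qC q (Suc a1) b1"
            using S2 IHa IHb True a1 b1 by simp
          also have "\<dots> = X * q ^ Suc a1 * qC q (Suc a1) (Suc b1)" by (rule alg_r2)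
          also have "q ^ (M \<omega> u + M \<omega> v) = X * q ^ Suc a1" using Mu True X_def a1 by (simp add: power_add)
          ultimately show ?thesis using la a1 lv by simp
        next
          case False
          have "SB \<omega> q u v = X * qC q a1 (Suc b1) + X * q ^ Suc a1 * qC q (Suc a1) b1"
            using S2 IHa IHb False by simp
          also have "\<dots> = X * qC q (Suc a1) (Suc b1)" by (rule alg_r1)
          also have "q ^ (M \<omega> u + M \<omega> v) = X" using Mu False X_def by simp
          ultimately show ?thesis using la a1 lv by simp
        qed
      qed
    qed
  next
    assume "v \<noteq> []"
    then obtain v0 y where vy: "v = v0 @ [y]" by (metis append_butlast_last_id)
    have d1: "distinct (v0 @ [y])" "distinct u" "set (v0 @ [y]) \<inter> set u = {}" using dist vy by auto
    have S1: "SB \<omega> q v u = (\<Sum>w\<in>sh v0 u. q ^ M \<omega> (w @ [y]))"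
      using SB_snoc[OF d1] vy by simp
    show "SB \<omega> q v u = q ^ (M \<omega> u + M \<omega> v + length u) * qC q (length u) (length v - 1)"
    proof (cases "v0 = []")
      case True
      have "M \<omega> (u @ [y]) = M \<omega> u + length u"
      proof (cases "u = []")
        case False
        then have "last u \<in> set u" by simp
        then have "\<omega> y < \<omega> (last u)" using dist(4) vy by auto
        then show ?thesis using False by (simp add: M_snoc)
      qed simp
      then show ?thesis using S1 True vy sh_Nil[OF dist(1)] by simp
    next
      case False
      define e where "e = (\<omega> y < \<omega> (last v0))"
      define a where "a = length u"
      define b0 where "b0 = length v0"
      have dv0: "distinct v0" "set v0 \<inter> set u = {}" using d1 by auto
      have Mv: "M \<omega> v = M \<omega> v0 + (if e then b0 else 0)"
        using vy False by (simp add: M_snoc e_def b0_def)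
      have "(\<Sum>w\<in>sh v0 u. q ^ M \<omega> (w @ [y])) =
          (\<Sum>w\<in>{w \<in> sh v0 u. w \<noteq> [] \<and> last w \<in> set v0}. q ^ M \<omega> (w @ [y])) +
          (\<Sum>w\<in>{w \<in> sh v0 u. w \<noteq> [] \<and> last w \<in> set u}. q ^ M \<omega> (w @ [y]))"
        by (rule sh_split) (use dv0 False in auto)
      also have "(\<Sum>w\<in>{w \<in> sh v0 u. w \<noteq> [] \<and> last w \<in> set v0}. q ^ M \<omega> (w @ [y])) =
          (\<Sum>w\<in>{w \<in> sh v0 u. w \<noteq> [] \<and> last w \<in> set v0}. q ^ (M \<omega> w + (if e then b0 + a else 0)))"
      proof (rule sum.cong[OF refl])
        fix w assume w: "w \<in> {w \<in> sh v0 u. w \<noteq> [] \<and> last w \<in> set v0}"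
        then have "last w = last v0" using sh_last by blast
        moreover have "length w = b0 + a" using w sh_length dv0 d1 a_def b0_def by auto
        ultimately show "q ^ M \<omega> (w @ [y]) = q ^ (M \<omega> w + (if e then b0 + a else 0))"
          using w by (simp add: M_snoc e_def)
      qed
      also have "\<dots> = q ^ (if e then b0 + a else 0) * SB \<omega> q v0 u"
        by (rule sum_part_u) (use dv0 d1 in auto)
      also have "(\<Sum>w\<in>{w \<in> sh v0 u. w \<noteq> [] \<and> last w \<in> set u}. q ^ M \<omega> (w @ [y])) =
          (\<Sum>w\<in>{w \<in> sh v0 u. w \<noteq> [] \<and> last w \<in> set u}. q ^ (M \<omega> w + (b0 + a)))"
      proof (rule sum.cong[OF refl])
        fix w assume w: "w \<in> {w \<in> sh v0 u. w \<noteq> [] \<and> last w \<in> set u}"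
        then have "\<omega> y < \<omega> (last w)" using dist(4) vy by auto
        moreover have "length w = b0 + a" using w sh_length dv0 d1 a_def b0_def by auto
        ultimately show "q ^ M \<omega> (w @ [y]) = q ^ (M \<omega> w + (b0 + a))" using w by (simp add: M_snoc)
      qed
      also have "\<dots> = q ^ (b0 + a) * SB \<omega> q u v0"
        unfolding part_v_eq[of v0 u] by (rule sum_part_u) (use dv0 d1 in auto)
      finally have S2: "SB \<omega> q v u = q ^ (if e then b0 + a else 0) * SB \<omega> q v0 u + q ^ (b0 + a) * SB \<omega> q u v0"
        using S1 by simp
      have lt: "length u + length v0 < length u + length v" using vy by simp
      have pr: "\<forall>x\<in>set u. \<forall>y\<in>set v0. \<omega> y < \<omega> x" using dist(4) vy by auto
      have IH: "u \<noteq> [] \<Longrightarrow> SB \<omega> q u v0 = q ^ (M \<omega> u + M \<omega> v0) * qC q (a - 1) b0"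
               "SB \<omega> q v0 u = q ^ (M \<omega> u + M \<omega> v0 + a) * qC q a (b0 - 1)"
      proof -
        have di: "set u \<inter> set v0 = {}" using dv0(2) by blast
        have "(u \<noteq> [] \<longrightarrow> SB \<omega> q u v0 = q ^ (M \<omega> u + M \<omega> v0) * qC q (length u - 1) (length v0)) \<and>
         (v0 \<noteq> [] \<longrightarrow> SB \<omega> q v0 u = q ^ (M \<omega> u + M \<omega> v0 + length u) * qC q (length u) (length v0 - 1))"
          by (rule less.hyps[OF lt dist(1) dv0(1) di pr])
        then show "u \<noteq> [] \<Longrightarrow> SB \<omega> q u v0 = q ^ (M \<omega> u + M \<omega> v0) * qC q (a - 1) b0"
               "SB \<omega> q v0 u = q ^ (M \<omega> u + M \<omega> v0 + a) * qC q a (b0 - 1)"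
          using False unfolding a_def b0_def by blast+
      qed
      obtain b1 where b1: "b0 = Suc b1" using False unfolding b0_def by (cases v0) auto
      have lb: "length v - 1 = b0" using vy b0_def by simp
      show ?thesis
      proof (cases "u = []")
        case True
        then have "a = 0" using a_def by simp
        then show ?thesis using S2 IH(2) Mv lb b1 True SB_Nil[of \<omega> q v0] a_def
          by (cases e) (simp_all add: power_add)
      next
        case une: False
        then obtain a1 where a1: "a = Suc a1" unfolding a_def by (cases u) auto
        note IH1 = IH(1)[OF une]
        define Y where "Y = q ^ (M \<omega> u + M \<omega> v0)"
        have IHa: "SB \<omega> q u v0 = Y * qC q a1 (Suc b1)" using IH1 a1 b1 Y_def by simp
        have IHb: "SB \<omega> q v0 u = Y * q ^ Suc a1 * qC q (Suc a1) b1" using IH(2) a1 b1 Y_def by (simp add: power_add)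
        show ?thesis
        proof (cases e)
          case True
          have "SB \<omega> q v u = q ^ (b0 + a) * (Y * qC q a1 (Suc b1) + Y * q ^ Suc a1 * qC q (Suc a1) b1)"
            using S2 IHa IHb True by (simp add: algebra_simps)
          also have "Y * qC q a1 (Suc b1) + Y * q ^ Suc a1 * qC q (Suc a1) b1 = Y * qC q (Suc a1) (Suc b1)" by (rule alg_r1)
          also have "q ^ (M \<omega> u + M \<omega> v + length u) = q ^ (b0 + a) * Y" using Mv True Y_def a_def by (simp add: power_add algebra_simps)
          ultimately show ?thesis using lb a1 b1 a_def by (simp add: algebra_simps)
        next
          case False
          have "SB \<omega> q v u = q ^ (Suc a1 + Suc b1) * (Y * qC q a1 (Suc b1)) + Y * q ^ Suc a1 * qC q (Suc a1) b1"
            using S2 IHa IHb False a1 b1 by (simp add: algebra_simps)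
          also have "\<dots> = Y * q ^ Suc a1 * qC q (Suc a1) (Suc b1)" by (rule alg_r2)
          also have "q ^ (M \<omega> u + M \<omega> v + length u) = Y * q ^ Suc a1" using Mv False Y_def a_def a1 by (simp add: power_add)
          ultimately show ?thesis using lb a1 b1 a_def by simp
        qed
      qed
    qed
  qed
qed

definition Ls :: "('b \<Rightarrow> 'b \<Rightarrow> bool) \<Rightarrow> 'b set \<Rightarrow> 'b list set" where
  "Ls le R = {w. distinct w \<and> set w = R \<and> sorted_wrt (\<lambda>a b. \<not> le b a) w}"

lemma finite_Ls: assumes "finite R" shows "finite (Ls le R)"
proof -
  have "Ls le R \<subseteq> {w. set w \<subseteq> R \<and> length w \<le> card R}"
    unfolding Ls_def by (auto simp: distinct_card[symmetric])
  then show ?thesis by (rule finite_subset) (use assms in \<open>auto intro: finite_lists_length_le\<close>)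
qed

lemma PP:
  fixes q :: "'a::comm_ring_1"
  assumes "distinct u" "distinct v" "set u \<inter> set v = {}" "\<forall>x\<in>set u. \<forall>y\<in>set v. \<omega> y < \<omega> x"
  shows "(\<Sum>w\<in>sh u v. q ^ (M \<omega> w + (if w \<noteq> [] \<and> last w \<in> set u then length u + length v else 0)))
       = q ^ length u * (\<Sum>w\<in>sh u v. q ^ M \<omega> w)"
proof (cases "u = []")
  case True
  then show ?thesis using sh_Nil[OF assms(2)] by simp
next
  case False
  define a where "a = length u"
  define b where "b = length v"
  have L: "(\<Sum>w\<in>sh u v. q ^ (M \<omega> w + (if w \<noteq> [] \<and> last w \<in> set u then a + b else 0)))
      = q ^ (a + b) * SB \<omega> q u v + SB \<omega> q v u"
  proof -
    have "(\<Sum>w\<in>sh u v. q ^ (M \<omega> w + (if w \<noteq> [] \<and> last w \<in> set u then a + b else 0))) =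
       (\<Sum>w\<in>{w \<in> sh u v. w \<noteq> [] \<and> last w \<in> set u}. q ^ (M \<omega> w + (if w \<noteq> [] \<and> last w \<in> set u then a + b else 0))) +
       (\<Sum>w\<in>{w \<in> sh u v. w \<noteq> [] \<and> last w \<in> set v}. q ^ (M \<omega> w + (if w \<noteq> [] \<and> last w \<in> set u then a + b else 0)))"
      by (rule sh_split) (use assms False in auto)
    also have "(\<Sum>w\<in>{w \<in> sh u v. w \<noteq> [] \<and> last w \<in> set u}. q ^ (M \<omega> w + (if w \<noteq> [] \<and> last w \<in> set u then a + b else 0)))
        = (\<Sum>w\<in>{w \<in> sh u v. w \<noteq> [] \<and> last w \<in> set u}. q ^ (M \<omega> w + (a + b)))"
      by (rule sum.cong) auto
    also have "\<dots> = q ^ (a + b) * SB \<omega> q u v" by (rule sum_part_u) (use assms in auto)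
    also have "(\<Sum>w\<in>{w \<in> sh u v. w \<noteq> [] \<and> last w \<in> set v}. q ^ (M \<omega> w + (if w \<noteq> [] \<and> last w \<in> set u then a + b else 0)))
        = (\<Sum>w\<in>{w \<in> sh u v. w \<noteq> [] \<and> last w \<in> set v}. q ^ M \<omega> w)"
      by (rule sum.cong) (use assms(3) in auto)
    also have "\<dots> = SB \<omega> q v u" by (simp only: SB_def part_v_eq[of u v])
    finally show ?thesis .
  qed
  have R: "(\<Sum>w\<in>sh u v. q ^ M \<omega> w) = SB \<omega> q u v + SB \<omega> q v u"
  proof -
    have "(\<Sum>w\<in>sh u v. q ^ M \<omega> w) =
       (\<Sum>w\<in>{w \<in> sh u v. w \<noteq> [] \<and> last w \<in> set u}. q ^ M \<omega> w) +
       (\<Sum>w\<in>{w \<in> sh u v. w \<noteq> [] \<and> last w \<in> set v}. q ^ M \<omega> w)"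
      by (rule sh_split) (use assms False in auto)
    then show ?thesis by (simp only: SB_def part_v_eq[of u v])
  qed
  obtain a1 where a1: "a = Suc a1" using False unfolding a_def by (cases u) auto
  have C: "(u \<noteq> [] \<longrightarrow> SB \<omega> q u v = q ^ (M \<omega> u + M \<omega> v) * qC q (length u - 1) (length v)) \<and>
         (v \<noteq> [] \<longrightarrow> SB \<omega> q v u = q ^ (M \<omega> u + M \<omega> v + length u) * qC q (length u) (length v - 1))"
    by (rule closed[OF assms])
  show ?thesis
  proof (cases "v = []")
    case True
    then show ?thesis using L R SB_Nil[of \<omega> q u] a_def b_def by (simp cong: if_cong)
  next
    case vne: False
    then obtain b1 where b1: "b = Suc b1" unfolding b_def by (cases v) auto
    define X where "X = q ^ (M \<omega> u + M \<omega> v)"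
    have S1: "SB \<omega> q u v = X * qC q a1 (Suc b1)" using C False a1 b1 a_def b_def X_def by simp
    have S2: "SB \<omega> q v u = X * q ^ Suc a1 * qC q (Suc a1) b1" using C vne a1 b1 a_def b_def X_def
      by (simp add: power_add)
    have "(\<Sum>w\<in>sh u v. q ^ (M \<omega> w + (if w \<noteq> [] \<and> last w \<in> set u then length u + length v else 0)))
       = q ^ (Suc a1 + Suc b1) * (X * qC q a1 (Suc b1)) + X * q ^ Suc a1 * qC q (Suc a1) b1"
      using L S1 S2 a1 b1 a_def b_def by (simp cong: if_cong)
    also have "\<dots> = X * q ^ Suc a1 * qC q (Suc a1) (Suc b1)" by (rule alg_r2)
    also have "\<dots> = q ^ Suc a1 * (X * qC q a1 (Suc b1) + X * q ^ Suc a1 * qC q (Suc a1) b1)"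
      using alg_r1[of X q a1 b1] by (simp add: algebra_simps)
    also have "\<dots> = q ^ length u * (\<Sum>w\<in>sh u v. q ^ M \<omega> w)"
      using R S1 S2 a1 a_def by simp
    finally show ?thesis .
  qed
qed

lemma sorted_cross:
  assumes "set w \<subseteq> A \<union> B" "\<forall>x\<in>A. \<forall>y\<in>B. P x y \<and> P y x"
    "sorted_wrt P (filter (\<lambda>z. z \<in> A) w)" "sorted_wrt P (filter (\<lambda>z. z \<in> B) w)"
  shows "sorted_wrt P w"
  using assms
proof (induction w)
  case Nil then show ?case by simp
next
  case (Cons x w)
  have sA: "sorted_wrt P (filter (\<lambda>z. z \<in> A) w)"
    using Cons.prems(3) by (cases "x \<in> A") auto
  have sB: "sorted_wrt P (filter (\<lambda>z. z \<in> B) w)"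
    using Cons.prems(4) by (cases "x \<in> B") auto
  have IH: "sorted_wrt P w" using Cons.IH Cons.prems(1,2) sA sB by auto
  have "P x y" if y: "y \<in> set w" for y
  proof -
    have x: "x \<in> A \<or> x \<in> B" using Cons.prems(1) by auto
    have yy: "y \<in> A \<or> y \<in> B" using Cons.prems(1) y by auto
    show ?thesis
    proof (cases "x \<in> A")
      case True
      show ?thesis
      proof (cases "y \<in> A")
        case True
        then have "y \<in> set (filter (\<lambda>z. z \<in> A) w)" using y by simp
        then show ?thesis using Cons.prems(3) \<open>x \<in> A\<close> by simp
      next
        case False
        then show ?thesis using yy Cons.prems(2) \<open>x \<in> A\<close> by blast
      qed
    next
      case False
      then have xB: "x \<in> B" using x by simp
      show ?thesis
      proof (cases "y \<in> B")
        case True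
        then have "y \<in> set (filter (\<lambda>z. z \<in> B) w)" using y by simp
        then show ?thesis using Cons.prems(4) xB by simp
      next
        case False
        then show ?thesis using yy Cons.prems(2) xB by blast
      qed
    qed
  qed
  then show ?case using IH by simp
qed

lemma Ls_group:
  assumes "finite R1" "finite R2" "R1 \<inter> R2 = {}" "\<forall>x\<in>R1. \<forall>y\<in>R2. \<not> le x y \<and> \<not> le y x"
  shows "(\<Sum>w\<in>Ls le (R1 \<union> R2). F w) = (\<Sum>p\<in>Ls le R1 \<times> Ls le R2. \<Sum>w\<in>sh (fst p) (snd p). F w)"
proof -
  let ?g = "\<lambda>w. (filter (\<lambda>z. z \<in> R1) w, filter (\<lambda>z. z \<in> R2) w)"
  have sub: "?g ` Ls le (R1 \<union> R2) \<subseteq> Ls le R1 \<times> Ls le R2"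
    unfolding Ls_def by (auto intro: sorted_wrt_filter)
  have key: "{w \<in> Ls le (R1 \<union> R2). ?g w = p} = sh (fst p) (snd p)" if p: "p \<in> Ls le R1 \<times> Ls le R2" for p
  proof -
    obtain u v where uv: "p = (u, v)" by (cases p)
    have u: "distinct u" "set u = R1" and v: "distinct v" "set v = R2" using p uv unfolding Ls_def by auto
    have "w \<in> Ls le (R1 \<union> R2) \<and> ?g w = (u, v) \<longleftrightarrow> w \<in> sh u v" for w
    proof
      assume "w \<in> Ls le (R1 \<union> R2) \<and> ?g w = (u, v)"
      then show "w \<in> sh u v" unfolding Ls_def sh_def using u v by auto
    next
      assume w: "w \<in> sh u v"
      then have w1: "distinct w" "set w = R1 \<union> R2" "filter (\<lambda>z. z \<in> R1) w = u" "filter (\<lambda>z. z \<in> R2) w = v"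
        unfolding sh_def using u v by auto
      have "sorted_wrt (\<lambda>a b. \<not> le b a) w"
      proof (rule sorted_cross[where A = R1 and B = R2])
        show "set w \<subseteq> R1 \<union> R2" using w1 by simp
        show "\<forall>x\<in>R1. \<forall>y\<in>R2. \<not> le y x \<and> \<not> le x y" using assms(4) by blast
        show "sorted_wrt (\<lambda>a b. \<not> le b a) (filter (\<lambda>z. z \<in> R1) w)" using w1 p uv unfolding Ls_def by auto
        show "sorted_wrt (\<lambda>a b. \<not> le b a) (filter (\<lambda>z. z \<in> R2) w)" using w1 p uv unfolding Ls_def by auto
      qed
      then show "w \<in> Ls le (R1 \<union> R2) \<and> ?g w = (u, v)" unfolding Ls_def using w1 by auto
    qed
    then show ?thesis using uv by auto
  qed
  have fin: "finite (Ls le (R1 \<union> R2))" "finite (Ls le R1 \<times> Ls le R2)"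
    using assms by (auto intro!: finite_Ls)
  have "(\<Sum>w\<in>Ls le (R1 \<union> R2). F w) = (\<Sum>p\<in>Ls le R1 \<times> Ls le R2. \<Sum>w\<in>{w \<in> Ls le (R1 \<union> R2). ?g w = p}. F w)"
    by (rule sum.group[symmetric]) (use fin sub in auto)
  also have "\<dots> = (\<Sum>p\<in>Ls le R1 \<times> Ls le R2. \<Sum>w\<in>sh (fst p) (snd p). F w)"
    by (rule sum.cong[OF refl]) (simp only: key)
  finally show ?thesis .
qed

lemma H_poset:
  fixes q :: "'a::comm_ring_1"
  assumes "finite R1" "finite R2" "R1 \<inter> R2 = {}" "\<forall>x\<in>R1. \<forall>y\<in>R2. \<not> le x y \<and> \<not> le y x"
    "\<forall>x\<in>R1. \<forall>y\<in>R2. \<omega> y < \<omega> x"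
  shows "(\<Sum>w\<in>Ls le (R1 \<union> R2). q ^ (M \<omega> w + (if w \<noteq> [] \<and> last w \<in> R1 then card R1 + card R2 else 0)))
       = q ^ card R1 * (\<Sum>w\<in>Ls le (R1 \<union> R2). q ^ M \<omega> w)"
proof -
  have pp: "(\<Sum>w\<in>sh (fst p) (snd p). q ^ (M \<omega> w + (if w \<noteq> [] \<and> last w \<in> R1 then card R1 + card R2 else 0)))
      = q ^ card R1 * (\<Sum>w\<in>sh (fst p) (snd p). q ^ M \<omega> w)" if p: "p \<in> Ls le R1 \<times> Ls le R2" for p
  proof -
    obtain u v where uv: "p = (u, v)" by (cases p)
    have u: "distinct u" "set u = R1" and v: "distinct v" "set v = R2" using p uv unfolding Ls_def by auto
    have cu: "card R1 = length u" "card R2 = length v" using u v distinct_card by metis+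
    have "(\<Sum>w\<in>sh u v. q ^ (M \<omega> w + (if w \<noteq> [] \<and> last w \<in> set u then length u + length v else 0)))
       = q ^ length u * (\<Sum>w\<in>sh u v. q ^ M \<omega> w)"
      by (rule PP) (use u v assms(3,5) in auto)
    then show ?thesis using uv u cu by (simp cong: if_cong)
  qed
  have "(\<Sum>w\<in>Ls le (R1 \<union> R2). q ^ (M \<omega> w + (if w \<noteq> [] \<and> last w \<in> R1 then card R1 + card R2 else 0)))
      = (\<Sum>p\<in>Ls le R1 \<times> Ls le R2. \<Sum>w\<in>sh (fst p) (snd p). q ^ (M \<omega> w + (if w \<noteq> [] \<and> last w \<in> R1 then card R1 + card R2 else 0)))"
    by (rule Ls_group[OF assms(1-4)])
  also have "\<dots> = (\<Sum>p\<in>Ls le R1 \<times> Ls le R2. q ^ card R1 * (\<Sum>w\<in>sh (fst p) (snd p). q ^ M \<omega> w))"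
    by (rule sum.cong[OF refl]) (rule pp)
  also have "\<dots> = q ^ card R1 * (\<Sum>w\<in>Ls le (R1 \<union> R2). q ^ M \<omega> w)"
    by (simp only: sum_distrib_left[symmetric] Ls_group[OF assms(1-4)])
  finally show ?thesis .
qed

lemma last_decomp:
  assumes "finite R" "R \<noteq> {}"
  shows "(\<Sum>w\<in>Ls le R. f w) = (\<Sum>x\<in>{x\<in>R. \<forall>y\<in>R. le x y \<longrightarrow> y = x}. \<Sum>w\<in>Ls le (R - {x}). f (w @ [x]))"
proof -
  let ?T = "{x\<in>R. \<forall>y\<in>R. le x y \<longrightarrow> y = x}"
  have wne: "w \<noteq> []" if "w \<in> Ls le R" for w using that assms(2) unfolding Ls_def by auto
  have sub: "last ` Ls le R \<subseteq> ?T"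
  proof
    fix x assume "x \<in> last ` Ls le R"
    then obtain w where w: "w \<in> Ls le R" "x = last w" by blast
    define w0 where "w0 = butlast w"
    have ww: "w = w0 @ [x]" using append_butlast_last_id[OF wne[OF w(1)]] w(2) unfolding w0_def by simp
    have "distinct w" "set w = R" "sorted_wrt (\<lambda>a b. \<not> le b a) w" using w(1) unfolding Ls_def by auto
    then have "x \<in> R" "\<forall>a\<in>set w0. \<not> le x a" "set w0 \<union> {x} = R" using ww by (auto simp: sorted_wrt_append)
    then show "x \<in> ?T" by blast
  qed
  have key: "{w \<in> Ls le R. last w = x} = (\<lambda>w0. w0 @ [x]) ` Ls le (R - {x})" if x: "x \<in> ?T" for x
  proof (intro set_eqI iffI)
    fix w assume w: "w \<in> {w \<in> Ls le R. last w = x}"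
    define w0 where "w0 = butlast w"
    have ww: "w = w0 @ [x]" using append_butlast_last_id[OF wne] w unfolding w0_def by auto
    have "distinct w" "set w = R" "sorted_wrt (\<lambda>a b. \<not> le b a) w" using w unfolding Ls_def by auto
    then have "w0 \<in> Ls le (R - {x})" using ww unfolding Ls_def by (auto simp: sorted_wrt_append)
    then show "w \<in> (\<lambda>w0. w0 @ [x]) ` Ls le (R - {x})" using ww by blast
  next
    fix w assume "w \<in> (\<lambda>w0. w0 @ [x]) ` Ls le (R - {x})"
    then obtain w0 where w0: "w = w0 @ [x]" "w0 \<in> Ls le (R - {x})" by blast
    then have h: "distinct w0" "set w0 = R - {x}" "sorted_wrt (\<lambda>a b. \<not> le b a) w0" unfolding Ls_def by auto
    have "\<forall>a\<in>set w0. \<not> le x a" using h(2) x by auto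
    then show "w \<in> {w \<in> Ls le R. last w = x}" using h w0 x unfolding Ls_def
      by (auto simp: sorted_wrt_append)
  qed
  have fT: "finite ?T" using assms(1) by simp
  have "(\<Sum>w\<in>Ls le R. f w) = (\<Sum>x\<in>?T. \<Sum>w\<in>{w \<in> Ls le R. last w = x}. f w)"
    by (rule sum.group[symmetric]) (use finite_Ls[OF assms(1)] fT sub in auto)
  also have "\<dots> = (\<Sum>x\<in>?T. \<Sum>w\<in>Ls le (R - {x}). f (w @ [x]))"
  proof (rule sum.cong[OF refl])
    fix x assume "x \<in> ?T"
    then show "(\<Sum>w\<in>{w \<in> Ls le R. last w = x}. f w) = (\<Sum>w\<in>Ls le (R - {x}). f (w @ [x]))"
      by (simp only: key) (subst sum.reindex, auto simp: inj_on_def)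
  qed
  finally show ?thesis .
qed

lemma maj_cong: "(\<And>k. 1 \<le> k \<Longrightarrow> k \<le> r \<Longrightarrow> \<sigma> k = \<tau> k) \<Longrightarrow> maj \<sigma> r = maj \<tau> r"
  unfolding maj_def by (rule sum.cong) auto

lemma T_emaj:
  assumes fin: "finite R"
  shows "emaj le R \<omega> q = (\<Sum>w\<in>Ls le R. q ^ M \<omega> w)"
proof -
  define n where "n = card R"
  define h where "h = (\<lambda>g. map (\<lambda>k. inv_into R g k) [1..<Suc n])"
  have len: "length (h g) = n" for g unfolding h_def by simp
  have nth_h: "h g ! k = inv_into R g (Suc k)" if "k < n" for g k
    using that unfolding h_def by (simp del: upt_Suc)
  have Mh: "M \<omega> (h g) = maj (\<lambda>k. \<omega> (inv_into R g k)) (card R)" for g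
    unfolding M_def len n_def[symmetric]
    by (rule maj_cong) (simp add: nth_h)
  have lin: "bij_betw g R {1..n}" "\<forall>x\<in>R. \<forall>y\<in>R. le x y \<longrightarrow> g x \<le> g y" "\<forall>x. x \<notin> R \<longrightarrow> g x = 0"
    if "g \<in> lin_exts le R" for g
    using that unfolding lin_exts_def n_def by auto
  have inv_bij: "bij_betw (inv_into R g) {1..n} R" if "g \<in> lin_exts le R" for g
    using bij_betw_inv_into[OF lin(1)[OF that]] .
  have inj: "inj_on h (lin_exts le R)"
  proof (rule inj_onI)
    fix g1 g2 assume g1: "g1 \<in> lin_exts le R" and g2: "g2 \<in> lin_exts le R" and e: "h g1 = h g2"
    have ie: "inv_into R g1 k = inv_into R g2 k" if "k \<in> {1..n}" for k
    proof -
      have "h g1 ! (k - 1) = h g2 ! (k - 1)" using e by simp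
      then show ?thesis using nth_h[of "k - 1"] that by auto
    qed
    show "g1 = g2"
    proof
      fix x
      show "g1 x = g2 x"
      proof (cases "x \<in> R")
        case True
        have b1: "bij_betw g1 R {1..n}" and b2: "bij_betw g2 R {1..n}" using lin g1 g2 by auto
        have k: "g1 x \<in> {1..n}" using b1 True bij_betwE by blast
        have "inv_into R g1 (g1 x) = x" by (rule inv_into_f_f[OF bij_betw_imp_inj_on[OF b1] True])
        then have "inv_into R g2 (g1 x) = x" using ie[OF k] by simp
        then have "g2 x = g2 (inv_into R g2 (g1 x))" by simp
        also have "\<dots> = g1 x" using k bij_betw_imp_surj_on[OF b2] by (simp add: f_inv_into_f)
        finally show ?thesis by simp
      next
        case False
        then show ?thesis using lin(3)[OF g1] lin(3)[OF g2] by simp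
      qed
    qed
  qed
  have into: "h g \<in> Ls le R" if g: "g \<in> lin_exts le R" for g
  proof -
    have ib: "bij_betw (inv_into R g) {1..n} R" by (rule inv_bij[OF g])
    have s1: "set [1..<Suc n] = {1..n}" by auto
    have "distinct (h g)" unfolding h_def distinct_map
      using bij_betw_imp_inj_on[OF ib] s1 by simp
    moreover have "set (h g) = R" unfolding h_def using bij_betw_imp_surj_on[OF ib] s1
      by (simp del: upt_Suc)
    moreover have "sorted_wrt (\<lambda>a b. \<not> le b a) (h g)"
    proof (unfold sorted_wrt_iff_nth_less, intro allI impI notI)
      fix i j assume ij: "i < j" "j < length (h g)" and l: "le (h g ! j) (h g ! i)"
      have jn: "j < n" using ij len by simp
      have in1: "Suc i \<in> {1..n}" "Suc j \<in> {1..n}" using ij jn by auto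
      have xi: "h g ! i = inv_into R g (Suc i)" "h g ! j = inv_into R g (Suc j)" using nth_h ij jn by auto
      have b: "bij_betw g R {1..n}" using lin g by auto
      have gi: "g (inv_into R g (Suc i)) = Suc i" "g (inv_into R g (Suc j)) = Suc j"
        using in1 bij_betw_imp_surj_on[OF b] by (simp_all add: f_inv_into_f)
      have R: "inv_into R g (Suc i) \<in> R" "inv_into R g (Suc j) \<in> R" using ib in1 bij_betwE by blast+
      have "g (inv_into R g (Suc j)) \<le> g (inv_into R g (Suc i))"
        using lin(2)[OF g] R l xi by auto
      then show False using gi ij by simp
    qed
    ultimately show ?thesis unfolding Ls_def by simp
  qed
  have onto: "w \<in> h ` lin_exts le R" if w: "w \<in> Ls le R" for w
  proof -
    have d: "distinct w" and sw: "set w = R" and so: "sorted_wrt (\<lambda>a b. \<not> le b a) w"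
      using w unfolding Ls_def by auto
    have lw: "length w = n" unfolding n_def using distinct_card[OF d] sw by simp
    have bn: "bij_betw ((!) w) {..<n} R" using bij_betw_nth[OF d _ sw[symmetric]] lw by simp
    define iv where "iv = inv_into {..<n} ((!) w)"
    have biv: "bij_betw iv R {..<n}" unfolding iv_def by (rule bij_betw_inv_into[OF bn])
    define g where "g = (\<lambda>x. if x \<in> R then Suc (iv x) else 0)"
    have ivw: "iv (w ! k) = k" if "k < n" for k
      unfolding iv_def using bn that by (simp add: bij_betw_imp_inj_on inv_into_f_f)
    have wiv: "w ! (iv x) = x" if "x \<in> R" for x
      unfolding iv_def using that bij_betw_imp_surj_on[OF bn] by (simp add: f_inv_into_f)
    have bg: "bij_betw g R {1..n}"
    proof -
      have "bij_betw (Suc \<circ> iv) R {1..n}"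
      proof (rule bij_betw_trans[OF biv])
        show "bij_betw Suc {..<n} {1..n}"
          by (simp add: bij_betw_def lessThan_atLeast0 atLeastLessThanSuc_atLeastAtMost[symmetric])
      qed
      then show ?thesis by (rule bij_betw_cong[THEN iffD1, rotated]) (simp add: g_def)
    qed
    have mono: "\<forall>x\<in>R. \<forall>y\<in>R. le x y \<longrightarrow> g x \<le> g y"
    proof (intro ballI impI)
      fix x y assume x: "x \<in> R" and y: "y \<in> R" and l: "le x y"
      have ix: "iv x < n" "iv y < n" using biv x y bij_betwE by blast+
      show "g x \<le> g y"
      proof (rule ccontr)
        assume "\<not> g x \<le> g y"
        then have "iv y < iv x" using x y unfolding g_def by simp
        then have "\<not> le (w ! iv x) (w ! iv y)" using so ix lw unfolding sorted_wrt_iff_nth_less by auto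
        then show False using l wiv x y by simp
      qed
    qed
    have gl: "g \<in> lin_exts le R" unfolding lin_exts_def n_def[symmetric] using bg mono by (auto simp: g_def)
    have "h g = w"
    proof (rule nth_equalityI)
      show "length (h g) = length w" using len lw by simp
      fix k assume "k < length (h g)"
      then have k: "k < n" using len by simp
      have wk: "w ! k \<in> R" using k lw sw by auto
      have "g (w ! k) = Suc k" using wk ivw[OF k] unfolding g_def by simp
      then have "inv_into R g (Suc k) = w ! k"
        using bg wk by (simp add: bij_betw_imp_inj_on inv_into_f_eq)
      then show "h g ! k = w ! k" using nth_h[OF k] by simp
    qed
    then show ?thesis using gl by blast
  qed
  have bij: "bij_betw h (lin_exts le R) (Ls le R)"
    unfolding bij_betw_def using inj into onto by blast
  have "emaj le R \<omega> q = (\<Sum>g\<in>lin_exts le R. q ^ M \<omega> (h g))"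
    unfolding emaj_def by (simp add: Mh)
  also have "\<dots> = (\<Sum>w\<in>Ls le R. q ^ M \<omega> w)"
    by (rule sum.reindex_bij_betw[OF bij])
  finally show ?thesis .
qed

lemma diag_iff: "(i, j) \<in> diagram lam \<longleftrightarrow> 1 \<le> i \<and> i \<le> length lam \<and> 1 \<le> j \<and> j \<le> lam ! (i - 1)"
  by (simp add: diagram_def)

lemma part_mono: "is_partition lam \<Longrightarrow> a \<le> b \<Longrightarrow> b < length lam \<Longrightarrow> lam ! b \<le> lam ! a"
  unfolding is_partition_def sorted_wrt_iff_nth_less
  by (cases "a = b") auto

lemma DC:
  assumes "is_partition lam" "(i, j) \<in> diagram lam" "1 \<le> i'" "i' \<le> i" "1 \<le> j'" "j' \<le> j"
  shows "(i', j') \<in> diagram lam"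
proof -
  have "lam ! (i - 1) \<le> lam ! (i' - 1)" using assms diag_iff[of i j lam]
    by (intro part_mono) auto
  then show ?thesis using assms diag_iff by auto
qed

lemma finite_diagram: "finite (diagram lam)"
proof -
  have "diagram lam \<subseteq> {..length lam} \<times> {..sum_list lam}"
  proof
    fix c assume "c \<in> diagram lam"
    then obtain i j where c: "c = (i, j)" "1 \<le> i" "i \<le> length lam" "1 \<le> j" "j \<le> lam ! (i - 1)"
      unfolding diagram_def by auto
    have "lam ! (i - 1) \<le> sum_list lam" using c by (intro elem_le_sum_list) auto
    then show "c \<in> {..length lam} \<times> {..sum_list lam}" using c by auto
  qed
  then show ?thesis by (rule finite_subset) auto
qed

lemma finite_skew: "finite (skew lam mu)"
  unfolding skew_def using finite_diagram by auto

locale strip =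
  fixes lam mu :: "nat list"
  assumes pl: "is_partition lam" and pm: "is_partition mu" and n22: "no_2x2 (skew lam mu)"
begin

abbreviation "S \<equiv> skew lam mu"

lemma skew_iff: "(i, j) \<in> S \<longleftrightarrow> (i, j) \<in> diagram lam \<and> (i, j) \<notin> diagram mu"
  by (simp add: skew_def)

lemma RECT:
  assumes "(i1, j1) \<in> S" "(i2, j2) \<in> S" "i1 \<le> i" "i \<le> i2" "j1 \<le> j" "j \<le> j2"
  shows "(i, j) \<in> S"
proof -
  have a: "(i1, j1) \<in> diagram lam" "(i1, j1) \<notin> diagram mu" "(i2, j2) \<in> diagram lam"
    using assms(1,2) skew_iff by auto
  have p: "1 \<le> i1" "1 \<le> j1" using a(1) diag_iff by auto
  have "(i, j) \<in> diagram lam" using DC[OF pl a(3)] assms p by auto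
  moreover have "(i, j) \<notin> diagram mu"
  proof
    assume "(i, j) \<in> diagram mu"
    then have "(i1, j1) \<in> diagram mu" using DC[OF pm] assms p by auto
    then show False using a(2) by simp
  qed
  ultimately show ?thesis using skew_iff by simp
qed

lemma NS:
  assumes "(i1, j1) \<in> S" "(i2, j2) \<in> S" "i1 < i2" "j1 < j2"
  shows False
proof -
  have "(i1, j1) \<in> S" "(Suc i1, j1) \<in> S" "(i1, Suc j1) \<in> S" "(Suc i1, Suc j1) \<in> S"
    using RECT[OF assms(1,2)] assms(3,4) by auto
  then show False using n22 unfolding no_2x2_def by blast
qed

lemma DCON:
  assumes "a \<in> S" "b \<in> S" "content a = content b"
  shows "a = b"
proof -
  obtain i1 j1 i2 j2 where ab: "a = (i1, j1)" "b = (i2, j2)" by (cases a, cases b) auto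
  have c: "int j1 - int i1 = int j2 - int i2" using assms(3) ab by (simp add: content_def)
  consider "i1 < i2" | "i2 < i1" | "i1 = i2" by linarith
  then show ?thesis
  proof cases
    case 1
    then have "j1 < j2" using c by linarith
    then show ?thesis using NS assms(1,2) ab 1 by blast
  next
    case 2
    then have "j2 < j1" using c by linarith
    then show ?thesis using NS assms(1,2) ab 2 by blast
  next
    case 3
    then show ?thesis using c ab by simp
  qed
qed

definition ismax :: "nat \<times> nat \<Rightarrow> bool" where
  "ismax x \<longleftrightarrow> x \<in> S \<and> (\<forall>y\<in>S. Qle x y \<longrightarrow> y = x)"

lemma G2:
  assumes mx: "ismax x" and y: "y \<in> S" and z: "z \<in> S"
    and cy: "content y < content x" and cz: "content x < content z"
  shows "\<not> Qle y z \<and> \<not> Qle z y"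
proof -
  obtain i1 j1 i2 j2 r c where ab: "y = (i1, j1)" "z = (i2, j2)" "x = (r, c)"
    by (cases y, cases z, cases x) auto
  have xS: "x \<in> S" and xm: "\<And>w. w \<in> S \<Longrightarrow> Qle x w \<Longrightarrow> w = x" using mx unfolding ismax_def by auto
  have cy': "int j1 - int i1 < int c - int r" and cz': "int c - int r < int j2 - int i2"
    using cy cz ab by (auto simp: content_def)
  have y1: "1 \<le> i1" "1 \<le> j1" using y ab skew_iff diag_iff by auto
  have "\<not> Qle y z"
  proof
    assume "Qle y z"
    then have le: "i2 \<le> i1" "j2 \<le> j1" using ab by (auto simp: Qle_def)
    consider "i2 < i1 \<and> j2 < j1" | "i1 = i2" | "j1 = j2 \<and> i2 < i1" using le by linarith
    then show False
    proof cases
      case 1 then show False using NS[of i2 j2 i1 j1] y z ab by auto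
    next
      case 2 then show False using cy' cz' le by linarith
    next
      case 3
      define r' where "r' = nat (int j1 - (int c - int r))"
      have r'1: "int r' = int j1 - (int c - int r)" using cz' 3 unfolding r'_def by linarith
      have r'2: "i2 < r'" "r' < i1" using r'1 cy' cz' 3 by linarith+
      have inS: "(r', j1) \<in> S" using RECT[of i2 j2 i1 j1 r' j1] y z ab 3 r'2 by auto
      have "content (r', j1) = content x" using r'1 ab by (simp add: content_def)
      then have xr: "x = (r', j1)" using DCON[OF xS inS] by simp
      have inS2: "(r' - 1, j1) \<in> S" using RECT[of i2 j2 i1 j1 "r' - 1" j1] y z ab 3 r'2 by auto
      have "Qle x (r' - 1, j1)" using xr by (simp add: Qle_def)
      then have "(r' - 1, j1) = x" using xm inS2 by blast
      then show False using xr r'2 by simp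
    qed
  qed
  moreover have "\<not> Qle z y"
  proof
    assume "Qle z y"
    then have le: "i1 \<le> i2" "j1 \<le> j2" using ab by (auto simp: Qle_def)
    consider "i1 < i2 \<and> j1 < j2" | "j1 = j2" | "i1 = i2 \<and> j1 < j2" using le by linarith
    then show False
    proof cases
      case 1 then show False using NS[of i1 j1 i2 j2] y z ab by auto
    next
      case 2 then show False using cy' cz' le by linarith
    next
      case 3
      define c' where "c' = nat (int i1 + (int c - int r))"
      have c'1: "int c' = int i1 + (int c - int r)" using cy' 3 y1 unfolding c'_def by linarith
      have c'2: "j1 < c'" "c' < j2" using c'1 cy' cz' 3 by linarith+
      have inS: "(i1, c') \<in> S" using RECT[of i1 j1 i2 j2 i1 c'] y z ab 3 c'2 by auto
      have "content (i1, c') = content x" using c'1 ab by (simp add: content_def)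
      then have xr: "x = (i1, c')" using DCON[OF xS inS] by simp
      have inS2: "(i1, c' - 1) \<in> S" using RECT[of i1 j1 i2 j2 i1 "c' - 1"] y z ab 3 c'2 by auto
      have "Qle x (i1, c' - 1)" using xr by (simp add: Qle_def)
      then have "(i1, c' - 1) = x" using xm inS2 by blast
      then show False using xr c'2 by simp
    qed
  qed
  ultimately show ?thesis by blast
qed

lemma IC_imp_max:
  assumes "u \<in> inner_corners lam mu"
  shows "ismax u"
proof -
  obtain nu where u: "u \<in> S" and nu: "is_partition nu" "diagram nu = diagram mu \<union> {u}"
    using assms unfolding inner_corners_def by auto
  obtain i j where uij: "u = (i, j)" by (cases u)
  have "y = u" if y: "y \<in> S" and q: "Qle u y" for y
  proof -
    obtain i' j' where yij: "y = (i', j')" by (cases y)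
    have y1: "1 \<le> i'" "1 \<le> j'" using y yij skew_iff diag_iff by auto
    have "u \<in> diagram nu" using nu by simp
    then have "y \<in> diagram nu" using DC[OF nu(1)] q uij yij y1 by (auto simp: Qle_def)
    then show "y = u" using nu y skew_iff yij by auto
  qed
  then show ?thesis using u unfolding ismax_def by blast
qed

lemma max_imp_IC:
  assumes mx: "ismax u"
  shows "u \<in> inner_corners lam mu"
proof -
  obtain i j where uij: "u = (i, j)" by (cases u)
  have uS: "u \<in> S" and xm: "\<And>w. w \<in> S \<Longrightarrow> Qle u w \<Longrightarrow> w = u" using mx unfolding ismax_def by auto
  have uL: "1 \<le> i" "i \<le> length lam" "1 \<le> j" "j \<le> lam ! (i - 1)" using uS uij skew_iff diag_iff by auto
  have uM: "\<not> (i \<le> length mu \<and> j \<le> mu ! (i - 1))" using uS uij skew_iff diag_iff uL by auto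
  have F1: "(i, j - 1) \<in> diagram mu" if "2 \<le> j"
  proof (rule ccontr)
    assume "(i, j - 1) \<notin> diagram mu"
    moreover have "(i, j - 1) \<in> diagram lam" using DC[OF pl, of i j i "j - 1"] uS uij skew_iff that uL by auto
    ultimately have "(i, j - 1) \<in> S" using skew_iff by simp
    moreover have "Qle u (i, j - 1)" using uij by (simp add: Qle_def)
    ultimately have "(i, j - 1) = u" using xm by blast
    then show False using uij that by simp
  qed
  have F2: "(i - 1, j) \<in> diagram mu" if "2 \<le> i"
  proof (rule ccontr)
    assume "(i - 1, j) \<notin> diagram mu"
    moreover have "(i - 1, j) \<in> diagram lam" using DC[OF pl, of i j "i - 1" j] uS uij skew_iff that uL by auto
    ultimately have "(i - 1, j) \<in> S" using skew_iff by simp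
    moreover have "Qle u (i - 1, j)" using uij by (simp add: Qle_def)
    ultimately have "(i - 1, j) = u" using xm by blast
    then show False using uij that by simp
  qed
  have pos: "\<forall>x\<in>set mu. 0 < x" and srt: "sorted_wrt (\<ge>) mu" using pm unfolding is_partition_def by auto
  show ?thesis
  proof (cases "2 \<le> j")
    case True
    have f1: "i \<le> length mu" "j - 1 \<le> mu ! (i - 1)" using F1[OF True] diag_iff by auto
    have mi: "mu ! (i - 1) = j - 1" using f1 uM by auto
    define nu where "nu = mu[i - 1 := j]"
    have nth_nu: "nu ! k = (if k = i - 1 then j else mu ! k)" if "k < length mu" for k
      using that unfolding nu_def by simp
    have lnu: "length nu = length mu" unfolding nu_def by simp
    have srt_nu: "sorted_wrt (\<ge>) nu"
      unfolding sorted_wrt_iff_nth_less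
    proof (intro allI impI)
      fix p r assume pr: "p < r" "r < length nu"
      show "nu ! r \<le> nu ! p"
      proof (cases "r = i - 1")
        case True
        then have i2: "2 \<le> i" using pr by simp
        have "j \<le> mu ! (i - 2)" using F2[OF i2] diag_iff by (auto simp: numeral_2_eq_2)
        moreover have "mu ! (i - 2) \<le> mu ! p" using pr True lnu by (intro part_mono[OF pm]) auto
        ultimately show ?thesis using nth_nu pr True lnu by auto
      next
        case False
        note rF = False
        show ?thesis
        proof (cases "p = i - 1")
          case True
          have "mu ! r \<le> mu ! (i - 1)" using pr True lnu by (intro part_mono[OF pm]) auto
          then show ?thesis using nth_nu pr True rF lnu mi by auto
        next
          case False
          have "mu ! r \<le> mu ! p" using pr lnu by (intro part_mono[OF pm]) auto
          then show ?thesis using nth_nu pr False rF lnu by auto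
        qed
      qed
    qed
    have pos_nu: "\<forall>x\<in>set nu. 0 < x"
      using pos set_update_subset_insert[of mu "i - 1" j] True unfolding nu_def by auto
    have pnu: "is_partition nu" using srt_nu pos_nu unfolding is_partition_def by simp
    have "diagram nu = diagram mu \<union> {u}"
    proof (intro set_eqI)
      fix c :: "nat \<times> nat"
      obtain a b where c: "c = (a, b)" by (cases c)
      show "c \<in> diagram nu \<longleftrightarrow> c \<in> diagram mu \<union> {u}"
      proof (cases "a = i")
        case True
        then show ?thesis using c uij f1 mi nth_nu[of "i - 1"] lnu uL diag_iff by auto
      next
        case False
        have ne: "a - 1 \<noteq> i - 1" if "1 \<le> a" using False uL(1) that by linarith
        show ?thesis using c uij nth_nu[of "a - 1"] lnu uL diag_iff ne by (auto cong: if_cong)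
      qed
    qed
    then show ?thesis using pnu uS unfolding inner_corners_def by blast
  next
    case False
    then have j1: "j = 1" using uL by simp
    have il: "length mu < i"
    proof (rule ccontr)
      assume "\<not> length mu < i"
      then have "mu ! (i - 1) \<in> set mu" using uL by auto
      then have "0 < mu ! (i - 1)" using pos by blast
      then show False using uM j1 \<open>\<not> length mu < i\<close> by auto
    qed
    have il2: "i = Suc (length mu)"
    proof (cases "2 \<le> i")
      case True
      then have "i - 1 \<le> length mu" using F2 diag_iff by auto
      then show ?thesis using il by linarith
    next
      case False
      then show ?thesis using il uL by linarith
    qed
    define nu where "nu = mu @ [1]"
    have pnu: "is_partition nu" using pos srt unfolding nu_def is_partition_def
      by (auto simp: sorted_wrt_append)
    have "diagram nu = diagram mu \<union> {u}"
    proof (intro set_eqI)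
      fix c :: "nat \<times> nat"
      obtain a b where c: "c = (a, b)" by (cases c)
      show "c \<in> diagram nu \<longleftrightarrow> c \<in> diagram mu \<union> {u}"
      proof (cases "a = Suc (length mu)")
        case True
        then show ?thesis using c uij il2 j1 diag_iff unfolding nu_def by (auto simp: nth_append)
      next
        case False
        then show ?thesis using c uij il2 diag_iff unfolding nu_def by (auto simp: nth_append)
      qed
    qed
    then show ?thesis using pnu uS unfolding inner_corners_def by blast
  qed
qed

end

theorem corollary7p1:
  fixes lam mu :: "nat list" and \<omega> :: "nat \<times> nat \<Rightarrow> nat" and q :: "'a::comm_ring_1"
  assumes "border_strip lam mu"
    and "reversed_schur_labeling lam mu \<omega>"
  shows "emaj Qle (skew lam mu) \<omega> q =
    (\<Sum>u\<in>inner_corners lam mu.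
        q ^ card {v \<in> skew lam mu. content v < content u} * emaj Qle (skew lam mu - {u}) \<omega> q)"
proof -
  have bs: "is_partition lam" "is_partition mu" "no_2x2 (skew lam mu)" "skew lam mu \<noteq> {}"
    using assms(1) unfolding border_strip_def edge_connected_def by auto
  interpret strip lam mu using bs by unfold_locales
  define R where "R = skew lam mu"
  have fR: "finite R" unfolding R_def by (rule finite_skew)
  have om: "\<And>u v. u \<in> R \<Longrightarrow> v \<in> R \<Longrightarrow> content u < content v \<Longrightarrow> \<omega> v < \<omega> u"
    using assms(2) unfolding reversed_schur_labeling_def R_def by blast
  have maxset: "{x\<in>R. \<forall>y\<in>R. Qle x y \<longrightarrow> y = x} = inner_corners lam mu"
  proof (intro set_eqI iffI)
    fix x assume "x \<in> {x\<in>R. \<forall>y\<in>R. Qle x y \<longrightarrow> y = x}"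
    then have "ismax x" unfolding ismax_def R_def by blast
    then show "x \<in> inner_corners lam mu" by (rule max_imp_IC)
  next
    fix x assume "x \<in> inner_corners lam mu"
    then have "ismax x" by (rule IC_imp_max)
    then show "x \<in> {x\<in>R. \<forall>y\<in>R. Qle x y \<longrightarrow> y = x}" unfolding ismax_def R_def by blast
  qed
  have step: "(\<Sum>w\<in>Ls Qle (R - {x}). q ^ M \<omega> (w @ [x])) =
      q ^ card {v \<in> R. content v < content x} * emaj Qle (R - {x}) \<omega> q"
    if x: "x \<in> inner_corners lam mu" for x
  proof -
    have mx: "ismax x" using x by (rule IC_imp_max)
    have xR: "x \<in> R" using mx unfolding ismax_def R_def by blast
    define R1 where "R1 = {v \<in> R. content v < content x}"
    define R2 where "R2 = {v \<in> R. content x < content v}"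
    have RR: "R - {x} = R1 \<union> R2"
    proof (intro set_eqI iffI)
      fix v assume v: "v \<in> R - {x}"
      then have "content v \<noteq> content x" using DCON xR unfolding R_def by blast
      then show "v \<in> R1 \<union> R2" using v unfolding R1_def R2_def by auto
    next
      fix v assume "v \<in> R1 \<union> R2"
      then show "v \<in> R - {x}" unfolding R1_def R2_def by auto
    qed
    have f12: "finite R1" "finite R2" using fR unfolding R1_def R2_def by auto
    have d12: "R1 \<inter> R2 = {}" unfolding R1_def R2_def by auto
    have cross: "\<forall>a\<in>R1. \<forall>b\<in>R2. \<not> Qle a b \<and> \<not> Qle b a"
      using G2[OF mx] unfolding R1_def R2_def R_def by blast
    have omc: "\<forall>a\<in>R1. \<forall>b\<in>R2. \<omega> b < \<omega> a"
      using om unfolding R1_def R2_def by force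
    have "(\<Sum>w\<in>Ls Qle (R - {x}). q ^ M \<omega> (w @ [x])) =
        (\<Sum>w\<in>Ls Qle (R1 \<union> R2). q ^ (M \<omega> w + (if w \<noteq> [] \<and> last w \<in> R1 then card R1 + card R2 else 0)))"
      unfolding RR
    proof (rule sum.cong[OF refl])
      fix w assume w: "w \<in> Ls Qle (R1 \<union> R2)"
      then have d: "distinct w" and sw: "set w = R1 \<union> R2" unfolding Ls_def by auto
      have lw: "length w = card R1 + card R2"
        using distinct_card[OF d] sw card_Un_disjoint[OF f12 d12] by simp
      have "(w \<noteq> [] \<and> \<omega> x < \<omega> (last w)) \<longleftrightarrow> (w \<noteq> [] \<and> last w \<in> R1)"
      proof (cases "w = []")
        case False
        then have "last w \<in> R1 \<union> R2" using sw by (metis last_in_set)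
        then show ?thesis
        proof
          assume "last w \<in> R1"
          then have "\<omega> x < \<omega> (last w)" using om xR unfolding R1_def by blast
          then show ?thesis using \<open>last w \<in> R1\<close> by simp
        next
          assume l2: "last w \<in> R2"
          then have "\<omega> (last w) < \<omega> x" using om xR unfolding R2_def by blast
          moreover have "last w \<notin> R1" using l2 d12 by blast
          ultimately show ?thesis by simp
        qed
      qed simp
      then show "q ^ M \<omega> (w @ [x]) = q ^ (M \<omega> w + (if w \<noteq> [] \<and> last w \<in> R1 then card R1 + card R2 else 0))"
        using lw by (simp add: M_snoc)
    qed
    also have "\<dots> = q ^ card R1 * (\<Sum>w\<in>Ls Qle (R1 \<union> R2). q ^ M \<omega> w)"
      by (rule H_poset[OF f12 d12 cross omc])
    also have "(\<Sum>w\<in>Ls Qle (R1 \<union> R2). q ^ M \<omega> w) = emaj Qle (R - {x}) \<omega> q"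
      using T_emaj[of "R - {x}" Qle \<omega> q] fR RR f12 by simp
    finally show ?thesis unfolding R1_def .
  qed
  have "emaj Qle R \<omega> q = (\<Sum>w\<in>Ls Qle R. q ^ M \<omega> w)" by (rule T_emaj[OF fR])
  also have "\<dots> = (\<Sum>x\<in>{x\<in>R. \<forall>y\<in>R. Qle x y \<longrightarrow> y = x}. \<Sum>w\<in>Ls Qle (R - {x}). q ^ M \<omega> (w @ [x]))"
    by (rule last_decomp[OF fR]) (use bs(4) R_def in simp)
  also have "\<dots> = (\<Sum>x\<in>inner_corners lam mu. q ^ card {v \<in> R. content v < content x} * emaj Qle (R - {x}) \<omega> q)"
    unfolding maxset by (rule sum.cong[OF refl]) (rule step)
  finally show ?thesis unfolding R_def .
qed

end
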